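(* Let $f\colon K\to R$ be a right t-unital homomorphism of (nonunital) rings. Then (a) a right $R$-module is t-unital as an $R$-module if and only if it is t-unital as a $K$-module; (b) a left $R$-module is c-unital as an $R$-module if and only if it is c-unital as a $K$-module.
   Context: Rings are associative, not necessarily unital; modules are not assumed unital; $R$-modules are regarded as $K$-modules via $f$. A right module $N$ over a ring $S$ is t-unital if $N\otimes_S S\to N$, $n\otimes s\mapsto ns$, is an isomorphism; a left $S$-module $P$ is c-unital if $P\to\mathrm{Hom}_S(S,P)$, $p\mapsto(s\mapsto sp)$, is an isomorphism. The homomorphism $f$ is right t-unital if $R$, as a right $K$-module via $f$, is t-unital. *)

theory Defs
  imports Main "HOL-Library.Poly_Mapping"
begin

text \<open>Nonunital rings are modelled by the type class ring (associative, not
necessarily commutative, no unit). Modules are abelian groups with an action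
satisfying the (non-unital) module axioms.\<close>

definition ring_hom_nu :: "('k::ring \<Rightarrow> 'r::ring) \<Rightarrow> bool" where
  "ring_hom_nu f \<longleftrightarrow> (\<forall>a b. f (a + b) = f a + f b) \<and> (\<forall>a b. f (a * b) = f a * f b)"

definition right_module :: "('n::ab_group_add \<Rightarrow> 's::ring \<Rightarrow> 'n) \<Rightarrow> bool" where
  "right_module act \<longleftrightarrow>
     (\<forall>n n' s. act (n + n') s = act n s + act n' s) \<and>
     (\<forall>n s s'. act n (s + s') = act n s + act n s') \<and>
     (\<forall>n s t. act (act n s) t = act n (s * t))"

definition left_module :: "('s::ring \<Rightarrow> 'p::ab_group_add \<Rightarrow> 'p) \<Rightarrow> bool" where
  "left_module act \<longleftrightarrow>
     (\<forall>s p p'. act s (p + p') = act s p + act s p') \<and>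
     (\<forall>s s' p. act (s + s') p = act s p + act s' p) \<and>
     (\<forall>s t p. act s (act t p) = act (s * t) p)"

definition zsm :: "int \<Rightarrow> 'a::ab_group_add \<Rightarrow> 'a" where
  "zsm k a = (if 0 \<le> k then (\<Sum>i<nat k. a) else - (\<Sum>i<nat (-k). a))"

text \<open>N \<otimes>_S S is the quotient of the free abelian group on N \<times> S
(finitely supported integer-valued functions) by the subgroup tens_rel
generated by the bilinearity and balancing relations.\<close>
inductive_set tens_rel :: "('n::ab_group_add \<Rightarrow> 's::ring \<Rightarrow> 'n) \<Rightarrow> (('n \<times> 's) \<Rightarrow>\<^sub>0 int) set"
  for act where
  add_left: "Poly_Mapping.single (n + n', s) 1 - Poly_Mapping.single (n, s) 1
              - Poly_Mapping.single (n', s) 1 \<in> tens_rel act"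
| add_right: "Poly_Mapping.single (n, s + s') 1 - Poly_Mapping.single (n, s) 1
              - Poly_Mapping.single (n, s') 1 \<in> tens_rel act"
| balanced: "Poly_Mapping.single (act n t, s) 1 - Poly_Mapping.single (n, t * s) 1 \<in> tens_rel act"
| zero: "0 \<in> tens_rel act"
| plus: "x \<in> tens_rel act \<Longrightarrow> y \<in> tens_rel act \<Longrightarrow> x + y \<in> tens_rel act"
| uminus: "x \<in> tens_rel act \<Longrightarrow> - x \<in> tens_rel act"

definition tmap :: "('n::ab_group_add \<Rightarrow> 's::ring \<Rightarrow> 'n) \<Rightarrow> (('n \<times> 's) \<Rightarrow>\<^sub>0 int) \<Rightarrow> 'n" where
  "tmap act x = (\<Sum>p\<in>Poly_Mapping.keys x. zsm (Poly_Mapping.lookup x p) (act (fst p) (snd p)))"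

text \<open>t-unital: the induced map N \<otimes>_S S \<rightarrow> N is bijective, i.e. the map on the
free group is surjective and its kernel is exactly (contained in) the relation subgroup.\<close>
definition t_unital :: "('n::ab_group_add \<Rightarrow> 's::ring \<Rightarrow> 'n) \<Rightarrow> bool" where
  "t_unital act \<longleftrightarrow> (\<forall>n. \<exists>x. tmap act x = n) \<and> (\<forall>x. tmap act x = 0 \<longrightarrow> x \<in> tens_rel act)"

definition left_hom_from_ring :: "('s::ring \<Rightarrow> 'p::ab_group_add \<Rightarrow> 'p) \<Rightarrow> ('s \<Rightarrow> 'p) \<Rightarrow> bool" where
  "left_hom_from_ring act h \<longleftrightarrow> (\<forall>s t. h (s + t) = h s + h t) \<and> (\<forall>s t. h (s * t) = act s (h t))"

definition c_unital :: "('s::ring \<Rightarrow> 'p::ab_group_add \<Rightarrow> 'p) \<Rightarrow> bool" where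
  "c_unital act \<longleftrightarrow> bij_betw (\<lambda>p s. act s p) UNIV {h. left_hom_from_ring act h}"

end

theory Submission
  imports Defs
begin


lemma zsm_nat: "zsm (int n) a = (\<Sum>i<n. a)"
  by (simp add: zsm_def)

lemma zsm_negnat: "zsm (- int n) a = - (\<Sum>i<n. a)"
  unfolding zsm_def by (cases "n = 0") auto

lemma zsm_0[simp]: "zsm 0 a = 0" by (simp add: zsm_def)

lemma zsm_succ: "zsm (k + 1) a = zsm k a + a"
proof (cases "k \<ge> 0")
  case True
  then obtain n where "k = int n" by (metis nonneg_eq_int)
  then show ?thesis using zsm_nat[of "Suc n" a] zsm_nat[of n a] by (simp add: add.commute)
next
  case False
  define m where "m = nat (- k) - 1"
  have m: "k = - int (Suc m)" using False unfolding m_def by simp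
  hence "k + 1 = - int m" by simp
  then show ?thesis using m zsm_negnat[of "Suc m" a] zsm_negnat[of m a] by simp
qed

lemma zsm_pred: "zsm (k - 1) a = zsm k a - a"
  using zsm_succ[of "k - 1" a] by simp

lemma zsm_add_left: "zsm (c + d) a = zsm c a + zsm d a"
proof (induction d rule: int_induct[where k=0])
  case base then show ?case by simp
next
  case (step1 i) then show ?case using zsm_succ[of "c+i" a] zsm_succ[of i a] by (simp add: add.assoc)
next
  case (step2 i)
  have e: "c + (i - 1) = (c + i) - 1" by simp
  show ?case unfolding e zsm_pred step2(2) by (simp add: algebra_simps)
qed

lemma zsm_1[simp]: "zsm 1 a = a" using zsm_succ[of 0 a] by simp

lemma zsm_uminus_left: "zsm (- c) a = - zsm c a"
  using zsm_add_left[of "-c" c a] by (simp add: eq_neg_iff_add_eq_0)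

lemma zsm_hom:
  assumes "\<And>a b. h (a + b) = h a + h b"
  shows "h (zsm c a) = zsm c (h a)"
proof -
  have h0: "h 0 = 0" using assms[of 0 0] by simp
  have hd: "h (a - b) = h a - h b" for a b using assms[of "a - b" b] by (simp add: eq_diff_eq)
  show ?thesis
  proof (induction c rule: int_induct[where k=0])
    case base then show ?case by (simp add: h0)
  next
    case (step1 i) then show ?case by (simp add: zsm_succ assms)
  next
    case (step2 i) then show ?case by (simp add: zsm_pred hd)
  qed
qed

lemma zsm_add_right: "zsm c (a + b) = zsm c a + zsm c b"
proof (induction c rule: int_induct[where k=0])
  case base then show ?case by simp
next
  case (step1 i) then show ?case using zsm_succ[of i "a+b"] zsm_succ[of i a] zsm_succ[of i b] by (simp add: algebra_simps)
next
  case (step2 i) show ?case by (simp only: zsm_pred step2(2)) (simp add: algebra_simps)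
qed

lemma zsm_diff_right: "zsm c (a - b) = zsm c a - zsm c b"
  using zsm_add_right[of c "a - b" b] by (simp add: eq_diff_eq)

lemma zsm_zero[simp]: "zsm c 0 = 0"
  using zsm_add_right[of c 0 0] by simp

lemma zsm_single: "zsm c (Poly_Mapping.single p (1::int)) = Poly_Mapping.single p c"
proof (induction c rule: int_induct[where k=0])
  case base then show ?case by simp
next
  case (step1 i) then show ?case by (simp add: zsm_succ single_add)
next
  case (step2 i) then show ?case by (simp add: zsm_pred single_diff)
qed

definition lin :: "('a \<Rightarrow> 'b::ab_group_add) \<Rightarrow> ('a \<Rightarrow>\<^sub>0 int) \<Rightarrow> 'b" where
  "lin g x = (\<Sum>p\<in>Poly_Mapping.keys x. zsm (Poly_Mapping.lookup x p) (g p))"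

lemma lin_superset:
  assumes "finite S" "Poly_Mapping.keys x \<subseteq> S"
  shows "lin g x = (\<Sum>p\<in>S. zsm (Poly_Mapping.lookup x p) (g p))"
  unfolding lin_def
  by (rule sum.mono_neutral_left) (use assms in \<open>auto simp: in_keys_iff\<close>)

lemma lin_0[simp]: "lin g 0 = 0" by (simp add: lin_def)

lemma lin_single[simp]: "lin g (Poly_Mapping.single p c) = zsm c (g p)"
  by (simp add: lin_def)

lemma lin_add: "lin g (x + y) = lin g x + lin g y"
proof -
  let ?S = "Poly_Mapping.keys x \<union> Poly_Mapping.keys y"
  have f: "finite ?S" by simp
  have "lin g (x + y) = (\<Sum>p\<in>?S. zsm (Poly_Mapping.lookup (x+y) p) (g p))"
    by (rule lin_superset[OF f]) (use keys_add[of x y] in auto)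
  also have "\<dots> = (\<Sum>p\<in>?S. zsm (Poly_Mapping.lookup x p) (g p)) + (\<Sum>p\<in>?S. zsm (Poly_Mapping.lookup y p) (g p))"
    by (simp add: lookup_add zsm_add_left sum.distrib)
  also have "\<dots> = lin g x + lin g y"
    using lin_superset[OF f, of x g] lin_superset[OF f, of y g] by simp
  finally show ?thesis .
qed

lemma lin_uminus: "lin g (- x) = - lin g x"
  using lin_add[of g "-x" x] by (simp add: eq_neg_iff_add_eq_0)

lemma lin_diff: "lin g (x - y) = lin g x - lin g y"
  using lin_add[of g x "-y"] lin_uminus[of g y] by simp

lemma free_induct:
  assumes "P 0" "\<And>p. P (Poly_Mapping.single p 1)" "\<And>a b. P a \<Longrightarrow> P b \<Longrightarrow> P (a - b)"
  shows "P (x :: 'a \<Rightarrow>\<^sub>0 int)"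
  using subset_UNIV[of "Poly_Mapping.keys x"]
  by (induction x rule: frag_induction) (use assms in auto)

lemma lin_hom:
  assumes "\<And>a b. h (a + b) = h a + h b"
  shows "h (lin g x) = lin (\<lambda>p. h (g p)) x"
proof -
  have h0: "h 0 = 0" using assms[of 0 0] by simp
  have hd: "h (a - b) = h a - h b" for a b using assms[of "a - b" b] by (simp add: eq_diff_eq)
  show ?thesis
    by (induction x rule: free_induct) (simp_all add: h0 hd lin_diff)
qed

lemma lin_compose: "lin g (lin h x) = lin (\<lambda>p. lin g (h p)) x"
  by (rule lin_hom) (rule lin_add)

lemma lin_fun_diff: "lin (\<lambda>p. g p - g' p) x = lin g x - lin g' x"
  by (induction x rule: free_induct) (simp_all add: lin_diff zsm_diff_right algebra_simps)

lemma lin_fun_zero: "lin (\<lambda>p. 0) x = 0"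
  by (induction x rule: free_induct) (simp_all add: lin_diff)

lemma lin_id: "lin (\<lambda>p. Poly_Mapping.single p (1::int)) x = x"
  by (induction x rule: free_induct) (simp_all add: lin_diff)

lemma lin_cong: "(\<And>p. g p = g' p) \<Longrightarrow> lin g x = lin g' x"
proof -
  assume "\<And>p. g p = g' p"
  hence "g = g'" by (rule ext)
  thus ?thesis by simp
qed

lemma tmap_lin: "tmap act x = lin (\<lambda>p. act (fst p) (snd p)) x"
  by (simp add: tmap_def lin_def)



lemma rel_diff: "x \<in> tens_rel act \<Longrightarrow> y \<in> tens_rel act \<Longrightarrow> x - y \<in> tens_rel act"
  unfolding diff_conv_add_uminus by (intro tens_rel.plus tens_rel.uminus)

lemma rel_add: "x \<in> tens_rel act \<Longrightarrow> y \<in> tens_rel act \<Longrightarrow> x + y \<in> tens_rel act"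
  by (rule tens_rel.plus)

lemma rel_lin: "(\<And>p. g p \<in> tens_rel act) \<Longrightarrow> lin g x \<in> tens_rel act"
  by (induction x rule: free_induct) (auto intro: rel_diff tens_rel.zero simp: lin_diff)

lemma addmod:
  assumes F: "\<And>a b. F (a + b) - F a - F b \<in> tens_rel act"
  shows "F (lin g x) - lin (\<lambda>p. F (g p)) x \<in> tens_rel act"
proof -
  have "- F 0 \<in> tens_rel act" using F[of 0 0] by simp
  hence F0: "F 0 \<in> tens_rel act" using tens_rel.uminus by fastforce
  have Fd: "F (a - b) - (F a - F b) \<in> tens_rel act" for a b
    using tens_rel.uminus[OF F[of "a - b" b]] by (simp add: algebra_simps)
  show ?thesis
  proof (induction x rule: free_induct)
    case 1 then show ?case by (simp add: F0)
  next
    case (2 p) then show ?case by (simp add: tens_rel.zero)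
  next
    case (3 a b)
    have eq: "F (lin g (a - b)) - lin (\<lambda>p. F (g p)) (a - b) =
       (F (lin g a - lin g b) - (F (lin g a) - F (lin g b))) + ((F (lin g a) - lin (\<lambda>p. F (g p)) a) - (F (lin g b) - lin (\<lambda>p. F (g p)) b))"
      by (simp add: lin_diff algebra_simps)
    show ?case unfolding eq by (intro rel_add rel_diff 3 Fd)
  qed
qed

lemma lin_rel:
  assumes "\<And>n n' s. G (n + n', s) - G (n, s) - G (n', s) \<in> tens_rel act'"
      "\<And>n s s'. G (n, s + s') - G (n, s) - G (n, s') \<in> tens_rel act'"
      "\<And>n t s. G (act n t, s) - G (n, t * s) \<in> tens_rel act'"
  shows "x \<in> tens_rel act \<Longrightarrow> lin G x \<in> tens_rel act'"
  by (induction x rule: tens_rel.induct)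
     (simp_all add: lin_diff lin_add lin_uminus assms tens_rel.zero tens_rel.plus tens_rel.uminus)

lemma lin_kill:
  assumes "\<And>n n' s. g (n + n', s) = g (n, s) + g (n', s)"
      "\<And>n s s'. g (n, s + s') = g (n, s) + g (n, s')"
      "\<And>n t s. g (act n t, s) = g (n, t * s)"
  shows "x \<in> tens_rel act \<Longrightarrow> lin g x = 0"
  by (induction x rule: tens_rel.induct)
     (simp_all add: lin_diff lin_add lin_uminus assms)

lemma tmap_single[simp]: "tmap act (frag_of (a, b)) = act a b"
  by (simp add: tmap_lin)

lemma tmap_diff: "tmap act (x - y) = tmap act x - tmap act y"
  by (simp add: tmap_lin lin_diff)

lemma tmap_add: "tmap act (x + y) = tmap act x + tmap act y"
  by (simp add: tmap_lin lin_add)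

lemma tmap_kill: "right_module act \<Longrightarrow> x \<in> tens_rel act \<Longrightarrow> tmap act x = 0"
  unfolding tmap_lin right_module_def by (rule lin_kill) auto

lemma tmap_mu_L:
  fixes f :: "'k::ring \<Rightarrow> 'r::ring"
  shows "tmap (\<lambda>r k. r * f k) (lin (\<lambda>q. frag_of (t * fst q, snd q)) z) = t * tmap (\<lambda>r k. r * f k) z"
proof -
  have "t * lin (\<lambda>p. fst p * f (snd p)) z = lin (\<lambda>p. t * (fst p * f (snd p))) z"
    by (rule lin_hom) (simp add: distrib_left)
  then show ?thesis unfolding tmap_lin lin_compose by (simp add: mult.assoc)
qed



lemma part_a:
  fixes f :: "'k::ring \<Rightarrow> 'r::ring" and act :: "'m::ab_group_add \<Rightarrow> 'r \<Rightarrow> 'm"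
  assumes hom: "ring_hom_nu f" and tu: "t_unital (\<lambda>(r::'r) (k::'k). r * f k)"
    and rm: "right_module act"
  shows "t_unital act \<longleftrightarrow> t_unital (\<lambda>m (k::'k). act m (f k))"
proof -
  let ?mu = "\<lambda>(r::'r) (k::'k). r * f k"
  let ?aK = "\<lambda>m (k::'k). act m (f k)"
  have fadd: "\<And>a b. f (a+b) = f a + f b" and fmul: "\<And>a b. f (a*b) = f a * f b"
    using hom unfolding ring_hom_nu_def by auto
  have ra: "\<And>n n' s. act (n+n') s = act n s + act n' s"
    and rb: "\<And>n s s'. act n (s+s') = act n s + act n s'"
    and rc: "\<And>n s t. act (act n s) t = act n (s*t)"
    using rm unfolding right_module_def by auto
  have musurj: "\<And>r. \<exists>z. tmap ?mu z = r" and muker: "\<And>z. tmap ?mu z = 0 \<Longrightarrow> z \<in> tens_rel ?mu"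
    using tu unfolding t_unital_def by auto
  define phi where "phi = lin (\<lambda>p::'m\<times>'k. frag_of (fst p, f (snd p)))"
  have tmap_phi: "tmap act (phi x) = tmap ?aK x" for x
    unfolding phi_def by (simp add: tmap_lin lin_compose)
  have phi_diff: "phi (a - b) = phi a - phi b" for a b unfolding phi_def by (rule lin_diff)
  have claimC: "\<exists>x. y - phi x \<in> tens_rel act" for y
  proof (induction y rule: free_induct)
    case 1 show ?case by (rule exI[of _ 0]) (simp add: phi_def tens_rel.zero)
  next
    case (2 p)
    obtain n r where p: "p = (n, r)" by (cases p)
    obtain z where z: "tmap ?mu z = r" using musurj by blast
    define x where "x = lin (\<lambda>q. frag_of (act n (fst q), snd q)) z"
    have px: "phi x = lin (\<lambda>q. frag_of (act n (fst q), f (snd q))) z"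
      unfolding x_def phi_def lin_compose by simp
    have A: "frag_of (n, lin (\<lambda>q. fst q * f (snd q)) z) - lin (\<lambda>q. frag_of (n, fst q * f (snd q))) z \<in> tens_rel act"
      using addmod[where F="\<lambda>a. frag_of (n, a)" and act=act and g="\<lambda>q. fst q * f (snd q)" and x=z]
      by (simp add: tens_rel.add_right)
    have B: "lin (\<lambda>q. frag_of (n, fst q * f (snd q))) z - phi x \<in> tens_rel act"
      unfolding px lin_fun_diff[symmetric]
      by (rule rel_lin) (subst minus_diff_eq[symmetric], rule tens_rel.uminus, rule tens_rel.balanced)
    have r: "r = lin (\<lambda>q. fst q * f (snd q)) z" using z by (simp add: tmap_lin)
    have eq: "frag_of p - phi x = (frag_of (n, lin (\<lambda>q. fst q * f (snd q)) z) - lin (\<lambda>q. frag_of (n, fst q * f (snd q))) z) + (lin (\<lambda>q. frag_of (n, fst q * f (snd q))) z - phi x)"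
      unfolding p r by simp
    show ?case by (rule exI[of _ x]) (unfold eq, rule rel_add[OF A B])
  next
    case (3 a b)
    then obtain xa xb where ha: "a - phi xa \<in> tens_rel act" and hb: "b - phi xb \<in> tens_rel act" by blast
    have eq: "a - b - phi (xa - xb) = (a - phi xa) - (b - phi xb)" by (simp add: phi_diff)
    show ?case by (rule exI[of _ "xa - xb"]) (unfold eq, rule rel_diff[OF ha hb])
  qed
  have phi_rel: "x \<in> tens_rel ?aK \<Longrightarrow> phi x \<in> tens_rel act" for x
    unfolding phi_def
    by (rule lin_rel) (simp_all add: fadd fmul tens_rel.add_left tens_rel.add_right tens_rel.balanced)
  have kill: "y - y' \<in> tens_rel act \<Longrightarrow> tmap act y = tmap act y'" for y y'
    using tmap_kill[OF rm, of "y - y'"] tmap_diff[of act y y'] by simp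
  show ?thesis
  proof
    assume tA: "t_unital act"
    have asurj: "\<And>n. \<exists>y. tmap act y = n" and aker: "\<And>y. tmap act y = 0 \<Longrightarrow> y \<in> tens_rel act"
      using tA unfolding t_unital_def by auto
    show "t_unital ?aK"
      unfolding t_unital_def
    proof (intro conjI allI impI)
      fix n
      obtain y where y: "tmap act y = n" using asurj by blast
      obtain x where "y - phi x \<in> tens_rel act" using claimC by blast
      hence "tmap act y = tmap act (phi x)" by (rule kill)
      hence "tmap ?aK x = n" using y tmap_phi[of x] by simp
      then show "\<exists>x. tmap ?aK x = n" by blast
    next
      fix x :: "'m \<times> 'k \<Rightarrow>\<^sub>0 int"
      assume x0: "tmap ?aK x = 0"
      define ys where "ys n = (SOME y. tmap act y = n)" for n
      have ys: "tmap act (ys n) = n" for n unfolding ys_def by (rule someI_ex) (rule asurj)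
      define zs where "zs r = (SOME z. tmap ?mu z = r)" for r
      have zs: "tmap ?mu (zs r) = r" for r unfolding zs_def by (rule someI_ex) (rule musurj)
      define chi where "chi m = (\<lambda>q::'r\<times>'k. frag_of (act m (fst q), snd q))" for m
      define psi where "psi = (\<lambda>q::'m\<times>'r. lin (chi (fst q)) (zs (snd q)))"
      have chirel: "z \<in> tens_rel ?mu \<Longrightarrow> lin (chi m) z \<in> tens_rel ?aK" for z m
      proof (rule lin_rel)
        fix n n' s show "chi m (n + n', s) - chi m (n, s) - chi m (n', s) \<in> tens_rel ?aK"
          unfolding chi_def by (simp add: rb tens_rel.add_left)
      next
        fix n s s' show "chi m (n, s + s') - chi m (n, s) - chi m (n, s') \<in> tens_rel ?aK"
          unfolding chi_def by (simp add: tens_rel.add_right)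
      next
        fix n t s
        have e: "act m (n * f t) = ?aK (act m n) t" by (simp add: rc)
        show "chi m (?mu n t, s) - chi m (n, t * s) \<in> tens_rel ?aK"
          unfolding chi_def using tens_rel.balanced[of ?aK "act m n" t s] e by simp
      qed
      have psirel: "y \<in> tens_rel act \<Longrightarrow> lin psi y \<in> tens_rel ?aK" for y
      proof (rule lin_rel)
        fix n n' s
        have "psi (n + n', s) - psi (n, s) - psi (n', s) = lin (\<lambda>q. chi (n + n') q - chi n q - chi n' q) (zs s)"
          unfolding psi_def by (simp add: lin_fun_diff)
        also have "\<dots> \<in> tens_rel ?aK"
          by (rule rel_lin) (simp add: chi_def ra tens_rel.add_left)
        finally show "psi (n + n', s) - psi (n, s) - psi (n', s) \<in> tens_rel ?aK" .
      next
        fix n s s'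
        have "psi (n, s + s') - psi (n, s) - psi (n, s') = lin (chi n) (zs (s + s') - zs s - zs s')"
          unfolding psi_def by (simp add: lin_diff)
        also have "\<dots> \<in> tens_rel ?aK"
          by (rule chirel, rule muker) (simp add: tmap_diff zs)
        finally show "psi (n, s + s') - psi (n, s) - psi (n, s') \<in> tens_rel ?aK" .
      next
        fix n t s
        have "lin (chi (act n t)) (zs s) = lin (chi n) (lin (\<lambda>q. frag_of (t * fst q, snd q)) (zs s))"
          unfolding lin_compose by (simp add: chi_def rc)
        hence "psi (act n t, s) - psi (n, t * s) = lin (chi n) (lin (\<lambda>q. frag_of (t * fst q, snd q)) (zs s) - zs (t * s))"
          unfolding psi_def by (simp add: lin_diff)
        also have "\<dots> \<in> tens_rel ?aK"
          by (rule chirel, rule muker) (simp add: tmap_diff zs tmap_mu_L)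
        finally show "psi (act n t, s) - psi (n, t * s) \<in> tens_rel ?aK" .
      qed
      define Y where "Y = lin (\<lambda>q. lin (\<lambda>q'. frag_of (fst q', snd q' * f (snd q))) (ys (fst q))) x"
      have inner: "lin (\<lambda>q'. act (fst q') (snd q' * f k)) (ys n) = act n (f k)" for n k
      proof -
        have "act n (f k) = act (lin (\<lambda>q'. act (fst q') (snd q')) (ys n)) (f k)"
          using ys[of n] by (simp add: tmap_lin)
        also have "\<dots> = lin (\<lambda>q'. act (act (fst q') (snd q')) (f k)) (ys n)"
          by (rule lin_hom) (simp add: ra)
        finally show ?thesis by (simp add: rc)
      qed
      have "tmap act Y = tmap ?aK x"
        unfolding Y_def by (simp add: tmap_lin lin_compose inner)
      hence "Y \<in> tens_rel act" using x0 aker by simp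
      hence PY: "lin psi Y \<in> tens_rel ?aK" by (rule psirel)
      define W where "W = lin (\<lambda>q. lin (\<lambda>q'. frag_of (act (fst q') (snd q'), snd q)) (ys (fst q))) x"
      have D1: "psi (m, r * f k) - frag_of (act m r, k) \<in> tens_rel ?aK" for m r k
      proof -
        have "psi (m, r * f k) - frag_of (act m r, k) = lin (chi m) (zs (r * f k) - frag_of (r, k))"
          unfolding psi_def by (simp add: lin_diff chi_def)
        also have "\<dots> \<in> tens_rel ?aK"
          by (rule chirel, rule muker) (simp add: tmap_diff zs)
        finally show ?thesis .
      qed
      have "lin psi Y - W = lin (\<lambda>q. lin (\<lambda>q'. psi (fst q', snd q' * f (snd q)) - frag_of (act (fst q') (snd q'), snd q)) (ys (fst q))) x"
        unfolding Y_def W_def lin_compose by (simp add: lin_fun_diff)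
      also have "\<dots> \<in> tens_rel ?aK"
        by (intro rel_lin D1)
      finally have E1: "lin psi Y - W \<in> tens_rel ?aK" .
      have D2: "lin (\<lambda>q'. frag_of (act (fst q') (snd q'), k)) (ys n) - frag_of (n, k) \<in> tens_rel ?aK" for n k
      proof -
        have "frag_of (lin (\<lambda>q'. act (fst q') (snd q')) (ys n), k) - lin (\<lambda>q'. frag_of (act (fst q') (snd q'), k)) (ys n) \<in> tens_rel ?aK"
          using addmod[where F="\<lambda>a. frag_of (a, k)" and act="?aK" and g="\<lambda>q'. act (fst q') (snd q')" and x="ys n"]
          by (simp add: tens_rel.add_left)
        hence "frag_of (n, k) - lin (\<lambda>q'. frag_of (act (fst q') (snd q'), k)) (ys n) \<in> tens_rel ?aK"
          using ys[of n] by (simp add: tmap_lin)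
        then show ?thesis by (subst minus_diff_eq[symmetric], rule tens_rel.uminus)
      qed
      have "W - x = lin (\<lambda>q. lin (\<lambda>q'. frag_of (act (fst q') (snd q'), snd q)) (ys (fst q)) - frag_of (fst q, snd q)) x"
        unfolding W_def lin_fun_diff by (simp add: lin_id)
      also have "\<dots> \<in> tens_rel ?aK" by (intro rel_lin D2)
      finally have E2: "W - x \<in> tens_rel ?aK" .
      have eq: "x = lin psi Y - (lin psi Y - W) - (W - x)" by simp
      show "x \<in> tens_rel ?aK" by (subst eq) (intro rel_diff PY E1 E2)
    qed
  next
    assume tK: "t_unital ?aK"
    have ksurj: "\<And>n. \<exists>x. tmap ?aK x = n" and kker: "\<And>x. tmap ?aK x = 0 \<Longrightarrow> x \<in> tens_rel ?aK"
      using tK unfolding t_unital_def by auto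
    show "t_unital act"
      unfolding t_unital_def
    proof (intro conjI allI impI)
      fix n obtain x where "tmap ?aK x = n" using ksurj by blast
      hence "tmap act (phi x) = n" using tmap_phi[of x] by simp
      then show "\<exists>y. tmap act y = n" by blast
    next
      fix y assume y0: "tmap act y = 0"
      obtain x where x: "y - phi x \<in> tens_rel act" using claimC by blast
      hence "tmap act y = tmap act (phi x)" by (rule kill)
      hence "tmap ?aK x = 0" using y0 tmap_phi[of x] by simp
      hence "phi x \<in> tens_rel act" using kker phi_rel by blast
      moreover have eq: "y = (y - phi x) + phi x" by simp
      ultimately show "y \<in> tens_rel act" by (subst eq) (intro rel_add x)
    qed
  qed
qed



lemma lm_basic:
  assumes "left_module act"
  shows "act s (p + p') = act s p + act s p'" "act (s + s') p = act s p + act s' p"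
    "act s (act t p) = act (s * t) p" "act s 0 = 0" "act s (p - p') = act s p - act s p'"
proof -
  show a: "act s (p + p') = act s p + act s p'" for s p p' using assms unfolding left_module_def by auto
  show "act (s + s') p = act s p + act s' p" "act s (act t p) = act (s * t) p"
    using assms unfolding left_module_def by auto
  show "act s 0 = 0" using a[of s 0 0] by simp
  show "act s (p - p') = act s p - act s p'" using a[of s "p - p'" p'] by (simp add: eq_diff_eq)
qed

lemma lm_inj_iff:
  assumes lm: "left_module act"
  shows "inj (\<lambda>p s. act s p) \<longleftrightarrow> (\<forall>q. (\<forall>s. act s q = 0) \<longrightarrow> q = 0)"
proof
  assume i: "inj (\<lambda>p s. act s p)"
  show "\<forall>q. (\<forall>s. act s q = 0) \<longrightarrow> q = 0"
  proof (intro allI impI)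
    fix q assume "\<forall>s. act s q = 0"
    hence "(\<lambda>s. act s q) = (\<lambda>s. act s 0)" using lm_basic(4)[OF lm] by auto
    then show "q = 0" using i by (auto dest: injD)
  qed
next
  assume h: "\<forall>q. (\<forall>s. act s q = 0) \<longrightarrow> q = 0"
  show "inj (\<lambda>p s. act s p)"
  proof (rule injI)
    fix p p' assume "(\<lambda>s. act s p) = (\<lambda>s. act s p')"
    hence "\<forall>s. act s (p - p') = 0" by (simp add: lm_basic(5)[OF lm] fun_eq_iff)
    then show "p = p'" using h by auto
  qed
qed

lemma c_unital_iff:
  assumes lm: "left_module act"
  shows "c_unital act \<longleftrightarrow> inj (\<lambda>p s. act s p) \<and> (\<forall>h. left_hom_from_ring act h \<longrightarrow> (\<exists>p. h = (\<lambda>s. act s p)))"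
proof -
  have "left_hom_from_ring act (\<lambda>s. act s p)" for p
    unfolding left_hom_from_ring_def using lm_basic[OF lm] by auto
  then show ?thesis unfolding c_unital_def bij_betw_def by blast
qed

lemma part_b:
  fixes f :: "'k::ring \<Rightarrow> 'r::ring" and act :: "'r \<Rightarrow> 'p::ab_group_add \<Rightarrow> 'p"
  assumes hom: "ring_hom_nu f" and tu: "t_unital (\<lambda>(r::'r) (k::'k). r * f k)"
    and lm: "left_module act"
  shows "c_unital act \<longleftrightarrow> c_unital (\<lambda>(k::'k) p. act (f k) p)"
proof -
  let ?mu = "\<lambda>(r::'r) (k::'k). r * f k"
  let ?aK = "\<lambda>(k::'k) p. act (f k) p"
  have fadd: "\<And>a b. f (a+b) = f a + f b" and fmul: "\<And>a b. f (a*b) = f a * f b"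
    using hom unfolding ring_hom_nu_def by auto
  note la = lm_basic(1)[OF lm] and lb = lm_basic(2)[OF lm] and lc = lm_basic(3)[OF lm]
    and l0 = lm_basic(4)[OF lm]
  have musurj: "\<And>r. \<exists>z. tmap ?mu z = r" and muker: "\<And>z. tmap ?mu z = 0 \<Longrightarrow> z \<in> tens_rel ?mu"
    using tu unfolding t_unital_def by auto
  have lmK: "left_module ?aK"
    unfolding left_module_def by (simp add: la lb lc fadd fmul)
  have act_lin: "act (lin g z) q = lin (\<lambda>x. act (g x) q) z" for g z q
    by (rule lin_hom) (simp add: lb)
  have annih: "act r q = 0" if "\<forall>k. act (f k) q = 0" for r q
  proof -
    obtain z where z: "tmap ?mu z = r" using musurj by blast
    have "act r q = lin (\<lambda>x. act (fst x * f (snd x)) q) z"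
      unfolding z[symmetric] tmap_lin by (simp add: act_lin)
    also have "\<dots> = lin (\<lambda>x. 0) z"
      by (rule lin_cong) (simp add: lc[symmetric] that l0)
    finally show ?thesis by (simp add: lin_fun_zero)
  qed
  have injeq: "inj (\<lambda>p s. act s p) \<longleftrightarrow> inj (\<lambda>p s. ?aK s p)"
    unfolding lm_inj_iff[OF lm] lm_inj_iff[OF lmK] using annih by blast
  show ?thesis
    unfolding c_unital_iff[OF lm] c_unital_iff[OF lmK]
  proof (intro iffI conjI)
    assume "inj (\<lambda>p s. act s p) \<and> (\<forall>h. left_hom_from_ring act h \<longrightarrow> (\<exists>p. h = (\<lambda>s. act s p)))"
    hence injR: "inj (\<lambda>p s. act s p)" and surR: "\<And>h. left_hom_from_ring act h \<Longrightarrow> \<exists>p. h = (\<lambda>s. act s p)"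
      by auto
    show "inj (\<lambda>p s. ?aK s p)" using injR injeq by blast
    show "\<forall>h. left_hom_from_ring ?aK h \<longrightarrow> (\<exists>p. h = (\<lambda>s. ?aK s p))"
    proof (intro allI impI)
      fix h assume hh: "left_hom_from_ring ?aK h"
      have hadd: "h (s + t) = h s + h t" and hmul: "h (s * t) = act (f s) (h t)" for s t
        using hh unfolding left_hom_from_ring_def by auto
      define G where "G = lin (\<lambda>q::'r\<times>'k. act (fst q) (h (snd q)))"
      have Gkill: "z \<in> tens_rel ?mu \<Longrightarrow> G z = 0" for z
        unfolding G_def by (rule lin_kill) (simp_all add: lb hadd la hmul lc)
      have Gwd: "tmap ?mu z = tmap ?mu z' \<Longrightarrow> G z = G z'" for z z'
        using Gkill[OF muker, of "z - z'"] unfolding G_def by (simp add: tmap_diff lin_diff)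
      define zs where "zs r = (SOME z. tmap ?mu z = r)" for r
      have zs: "tmap ?mu (zs r) = r" for r unfolding zs_def by (rule someI_ex) (rule musurj)
      define g where "g r = G (zs r)" for r
      have gwd: "tmap ?mu z = r \<Longrightarrow> G z = g r" for z r unfolding g_def by (rule Gwd) (simp add: zs)
      have GL: "G (lin (\<lambda>q. frag_of (s * fst q, snd q)) z) = act s (G z)" for s z
      proof -
        have "act s (G z) = lin (\<lambda>q. act s (act (fst q) (h (snd q)))) z"
          unfolding G_def by (rule lin_hom) (simp add: la)
        then show ?thesis unfolding G_def lin_compose by (simp add: lc)
      qed
      have "left_hom_from_ring act g"
        unfolding left_hom_from_ring_def
      proof (intro conjI allI)
        fix s t
        have "G (zs s + zs t) = g (s + t)" by (rule gwd) (simp add: tmap_add zs)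
        then show "g (s + t) = g s + g t" unfolding G_def g_def by (simp add: lin_add)
        have "G (lin (\<lambda>q. frag_of (s * fst q, snd q)) (zs t)) = g (s * t)"
          by (rule gwd) (simp add: tmap_mu_L zs)
        then show "g (s * t) = act s (g t)" using GL[of s "zs t"] unfolding g_def by simp
      qed
      then obtain p where p: "g = (\<lambda>s. act s p)" using surR by blast
      have "h k = act (f k) p" for k
      proof -
        have "act r (h k - act (f k) p) = 0" for r
        proof -
          have "G (frag_of (r, k)) = g (r * f k)" by (rule gwd) simp
          hence "act r (h k) = act (r * f k) p" unfolding G_def p by simp
          then show ?thesis by (simp add: lm_basic(5)[OF lm] lc)
        qed
        hence "h k - act (f k) p = 0" using injR unfolding lm_inj_iff[OF lm] by blast
        then show ?thesis by simp
      qed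
      then show "\<exists>p. h = (\<lambda>s. ?aK s p)" by blast
    qed
  next
    assume "inj (\<lambda>p s. ?aK s p) \<and> (\<forall>h. left_hom_from_ring ?aK h \<longrightarrow> (\<exists>p. h = (\<lambda>s. ?aK s p)))"
    hence injK: "inj (\<lambda>p s. ?aK s p)" and surK: "\<And>h. left_hom_from_ring ?aK h \<Longrightarrow> \<exists>p. h = (\<lambda>s. ?aK s p)"
      by auto
    show "inj (\<lambda>p s. act s p)" using injK injeq by blast
    show "\<forall>g. left_hom_from_ring act g \<longrightarrow> (\<exists>p. g = (\<lambda>s. act s p))"
    proof (intro allI impI)
      fix g assume gg: "left_hom_from_ring act g"
      have gadd: "g (s + t) = g s + g t" and gmul: "g (s * t) = act s (g t)" for s t
        using gg unfolding left_hom_from_ring_def by auto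
      have "left_hom_from_ring ?aK (\<lambda>k. g (f k))"
        unfolding left_hom_from_ring_def by (simp add: fadd fmul gadd gmul)
      then obtain p where p: "(\<lambda>k. g (f k)) = (\<lambda>k. act (f k) p)" using surK by blast
      have "g r = act r p" for r
      proof -
        obtain z where z: "tmap ?mu z = r" using musurj by blast
        have "g r = lin (\<lambda>q. g (fst q * f (snd q))) z"
          unfolding z[symmetric] tmap_lin by (rule lin_hom) (rule gadd)
        also have "\<dots> = lin (\<lambda>q. act (fst q * f (snd q)) p) z"
        proof (rule lin_cong)
          fix q :: "'r \<times> 'k"
          have "g (f (snd q)) = act (f (snd q)) p" using p by (simp add: fun_eq_iff)
          then show "g (fst q * f (snd q)) = act (fst q * f (snd q)) p" by (simp add: gmul lc)
        qed
        also have "\<dots> = act r p" unfolding z[symmetric] tmap_lin by (simp add: act_lin)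
        finally show ?thesis .
      qed
      then show "\<exists>p. g = (\<lambda>s. act s p)" by blast
    qed
  qed
qed


theorem corollary9p7:
  fixes f :: "'k::ring \<Rightarrow> 'r::ring"
  assumes "ring_hom_nu f"
    and "t_unital (\<lambda>(r::'r) (k::'k). r * f k)"
  shows "(\<forall>act :: 'm::ab_group_add \<Rightarrow> 'r \<Rightarrow> 'm. right_module act \<longrightarrow>
            (t_unital act \<longleftrightarrow> t_unital (\<lambda>m (k::'k). act m (f k))))
       \<and> (\<forall>act :: 'r \<Rightarrow> 'p::ab_group_add \<Rightarrow> 'p. left_module act \<longrightarrow>
            (c_unital act \<longleftrightarrow> c_unital (\<lambda>(k::'k) p. act (f k) p)))"
  using part_a[OF assms] part_b[OF assms] by blast

end
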